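(* Assume (A1)–(A4), let $x_1\in R\mathbb{B}$, and run the Algorithm with $\eta>0$ and $\rho\in[0,\epsilon]$. Let $x_\rho^\star\in\arg\min_{x\in\mathcal{X}_\rho}\sum_{t=1}^Tf_t(x)$. Then $$\sum_{t=1}^T\big(f_t(x_t)-f_t(x_\rho^\star)\big)\le\frac{2R^2}{\eta}+\frac{\eta}{2}G_f^2T .$$
   Context: Let $d,T$ be positive integers and $[T]=\{1,\dots,T\}$. Write $\|\cdot\|$ for the Euclidean norm and $\mathbb{B}=\{x\in\mathbb{R}^d:\|x\|\le1\}$. For a closed convex set $\mathcal{Y}$, $\Pi_{\mathcal{Y}}$ is the Euclidean projection onto $\mathcal{Y}$. For $a\in\mathbb{R}$, $[a]_+=\max(a,0)$. Let $g:\mathbb{R}^d\to\mathbb{R}$ be convex with subdifferential $\partial g(x)$. Set $\mathcal{X}=\{x:g(x)\le0\}$, and for $\rho\ge0$ set $\mathcal{X}_\rho=\{x:g(x)\le-\rho\}$. Assumptions: (A1) there is $R>0$ with $\mathcal{X}\subseteq R\mathbb{B}$; (A2) $f_1,\dots,f_T:\mathbb{R}^d\to\mathbb{R}$ are convex and differentiable, and there is $G_f>0$ with $\|\nabla f_t(x)\|\le G_f$ for all $x\in R\mathbb{B}$ and all $t\in[T]$; (A3) there is $G_g>0$ with $\|s\|\le G_g$ for all $s\in\partial g(x)$ and all $x\in R\mathbb{B}$; (A4) there are $\sigma,\epsilon>0$ such that $\mathcal{X}'=\{x:g(x)=-\epsilon\}$ is nonempty and $\|s\|\ge\sigma$ for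 all $s\in\partial g(x)$ and all $x\in\mathcal{X}'$. Algorithm (OGD with Polyak feasibility steps). Inputs are $x_1\in\mathbb{R}^d$, $\eta>0$ and $\rho\ge0$. For $t=1,\dots,T$: - play $x_t$ and then receive $f_t$; the functions may be chosen adversarially and may depend on past actions; - query $g_t=g(x_t)$ and some $s_t\in\partial g(x_t)$; - set $y_t=x_t-\eta\nabla f_t(x_t)$; - if $s_t\ne0$, set $x_{t+1}=\Pi_{R\mathbb{B}}\big(y_t-\frac{[g_t+s_t^\top(y_t-x_t)+\rho]_+}{\|s_t\|^2}s_t\big)$; if $s_t=0$, set $x_{t+1}=\Pi_{R\mathbb{B}}(y_t)$. *)

theory Defs
  imports "HOL-Analysis.Analysis"
begin

definition subdiff :: "('a::real_inner \<Rightarrow> real) \<Rightarrow> 'a \<Rightarrow> 'a set" where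
  "subdiff g x = {s. \<forall>y. g y \<ge> g x + inner s (y - x)}"

definition polyak_step ::
  "real \<Rightarrow> real \<Rightarrow> real \<Rightarrow> ('a::euclidean_space \<Rightarrow> real) \<Rightarrow> 'a \<Rightarrow> 'a \<Rightarrow> 'a \<Rightarrow> 'a" where
  "polyak_step R \<eta> \<rho> g s gradf x =
     (let y = x - \<eta> *\<^sub>R gradf in
      closest_point (cball 0 R)
        (if s \<noteq> 0
         then y - (max (g x + inner s (y - x) + \<rho>) 0 / (norm s)\<^sup>2) *\<^sub>R s
         else y))"

end

theory Submission
  imports Defs
begin

lemma tangent_ineq:
  fixes F :: "'a::euclidean_space \<Rightarrow> real"
  assumes cv: "convex_on UNIV F" and d: "(F has_derivative (\<lambda>h. inner gd h)) (at z)"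
  shows "F y \<ge> F z + inner gd (y - z)"
proof -
  define \<phi> where "\<phi> = (\<lambda>t::real. F (z + t *\<^sub>R (y - z)))"
  have cphi: "convex_on UNIV \<phi>"
  proof (rule convex_onI)
    fix u :: real and a b :: real
    assume "0 < u" "u < 1"
    have eq: "z + ((1 - u) *\<^sub>R a + u *\<^sub>R b) *\<^sub>R (y - z) = (1 - u) *\<^sub>R (z + a *\<^sub>R (y - z)) + u *\<^sub>R (z + b *\<^sub>R (y - z))"
      by (simp add: algebra_simps)
    show "\<phi> ((1 - u) *\<^sub>R a + u *\<^sub>R b) \<le> (1 - u) * \<phi> a + u * \<phi> b"
      unfolding \<phi>_def eq using convex_onD[OF cv, of u] \<open>0 < u\<close> \<open>u < 1\<close> by simp
  qed simp
  have l: "((\<lambda>t::real. z + t *\<^sub>R (y - z)) has_derivative (\<lambda>h. h *\<^sub>R (y - z))) (at 0)"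
    by (auto intro!: derivative_eq_intros)
  have "(\<phi> has_derivative (\<lambda>h. inner gd (h *\<^sub>R (y - z)))) (at 0)"
  proof -
    have "(\<phi> has_derivative (\<lambda>h. inner gd (h *\<^sub>R (y - z)))) (at 0)"
    proof -
      have d': "(F has_derivative (\<lambda>h. inner gd h)) (at (z + (0::real) *\<^sub>R (y - z)))" using d by simp
      show ?thesis unfolding \<phi>_def using has_derivative_compose[OF l d'] by simp
    qed
    thus ?thesis .
  qed
  hence "(\<phi> has_field_derivative (inner gd (y - z))) (at 0 within UNIV)"
  proof -
    have e: "(\<lambda>h. inner gd (h *\<^sub>R (y - z))) = (*) (inner gd (y - z))" by (rule ext) simp
    show ?thesis using \<open>(\<phi> has_derivative _) _\<close> unfolding has_field_derivative_def e by simp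
  qed
  from convex_on_imp_above_tangent[OF cphi _ _ _ this, of 1]
  have "\<phi> 1 - \<phi> 0 \<ge> inner gd (y - z)" by simp
  thus ?thesis unfolding \<phi>_def by simp
qed

lemma nsq: fixes a b :: "'a::real_inner"
  shows "(norm (a - l *\<^sub>R b))\<^sup>2 = (norm a)\<^sup>2 - 2 * (l * inner b a) + l * l * (norm b)\<^sup>2"
proof -
  have "(norm (a - l *\<^sub>R b))\<^sup>2 = inner (a - l *\<^sub>R b) (a - l *\<^sub>R b)" by (simp add: power2_norm_eq_inner)
  also have "\<dots> = inner a a - 2 * (l * inner b a) + l * l * inner b b"
    by (simp add: inner_diff_left inner_diff_right inner_commute[of a b] algebra_simps)
  finally show ?thesis by (simp add: power2_norm_eq_inner)
qed

lemma halfspace_step: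
  fixes y xs xt sv :: "'a::euclidean_space"
  assumes h: "c + inner sv (xs - xt) \<le> 0"
  shows "norm (y - (max (c + inner sv (y - xt)) 0 / (norm sv)\<^sup>2) *\<^sub>R sv - xs) \<le> norm (y - xs)"
proof (cases "c + inner sv (y - xt) \<le> 0")
  case True thus ?thesis by simp
next
  case False
  define hy where "hy = c + inner sv (y - xt)"
  define l where "l = hy / (norm sv)\<^sup>2"
  have hy: "hy > 0" using False hy_def by simp
  have sv: "sv \<noteq> 0" proof
    assume "sv = 0"
    with False h show False by simp
  qed
  have ns: "(norm sv)\<^sup>2 > 0" using sv by simp
  have l0: "l \<ge> 0" using hy ns l_def by simp
  have lns: "l * (norm sv)\<^sup>2 = hy" using ns l_def by simp
  have ip: "inner sv (y - xs) \<ge> hy"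
  proof -
    have "inner sv (y - xs) = inner sv (y - xt) - inner sv (xs - xt)" by (simp add: inner_diff_right)
    thus ?thesis using h hy_def by simp
  qed
  have "(norm (y - l *\<^sub>R sv - xs))\<^sup>2 = (norm (y - xs))\<^sup>2 - 2 * (l * inner sv (y - xs)) + l * l * (norm sv)\<^sup>2"
  proof -
    have e: "y - l *\<^sub>R sv - xs = (y - xs) - l *\<^sub>R sv" by simp
    show ?thesis unfolding e by (rule nsq)
  qed
  also have "\<dots> = (norm (y - xs))\<^sup>2 - 2 * (l * inner sv (y - xs)) + l * hy" using lns by (simp add: mult.assoc)
  also have "\<dots> \<le> (norm (y - xs))\<^sup>2 - l * hy"
    using mult_left_mono[OF ip l0] by linarith
  also have "\<dots> \<le> (norm (y - xs))\<^sup>2" using l0 hy by simp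
  finally have "(norm (y - l *\<^sub>R sv - xs))\<^sup>2 \<le> (norm (y - xs))\<^sup>2" .
  hence "norm (y - l *\<^sub>R sv - xs) \<le> norm (y - xs)" by (rule power2_le_imp_le) simp
  thus ?thesis using False hy_def l_def by simp
qed


theorem mainTheorem9:
  fixes g :: "'a::euclidean_space \<Rightarrow> real"
    and f :: "nat \<Rightarrow> 'a \<Rightarrow> real"
    and grad :: "nat \<Rightarrow> 'a \<Rightarrow> 'a"
    and x s :: "nat \<Rightarrow> 'a"
    and xstar :: 'a
    and T :: nat
    and R G\<^sub>f G\<^sub>g \<sigma> \<epsilon> \<eta> \<rho> :: real
  assumes T_pos: "T > 0"
    and g_convex: "convex_on UNIV g"
    and A1: "R > 0" "{x. g x \<le> 0} \<subseteq> cball 0 R"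
    and A2_convex: "\<And>t. t \<in> {1..T} \<Longrightarrow> convex_on UNIV (f t)"
    and A2_grad: "\<And>t z. t \<in> {1..T} \<Longrightarrow> (f t has_derivative (\<lambda>h. inner (grad t z) h)) (at z)"
    and A2_bound: "G\<^sub>f > 0" "\<And>t z. t \<in> {1..T} \<Longrightarrow> z \<in> cball 0 R \<Longrightarrow> norm (grad t z) \<le> G\<^sub>f"
    and A3: "G\<^sub>g > 0" "\<And>z v. z \<in> cball 0 R \<Longrightarrow> v \<in> subdiff g z \<Longrightarrow> norm v \<le> G\<^sub>g"
    and A4: "\<sigma> > 0" "\<epsilon> > 0" "{z. g z = - \<epsilon>} \<noteq> {}"
      "\<And>z v. g z = - \<epsilon> \<Longrightarrow> v \<in> subdiff g z \<Longrightarrow> norm v \<ge> \<sigma>"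
    and x1: "x 1 \<in> cball 0 R"
    and eta: "\<eta> > 0"
    and rho: "0 \<le> \<rho>" "\<rho> \<le> \<epsilon>"
    and subgrad: "\<And>t. t \<in> {1..T} \<Longrightarrow> s t \<in> subdiff g (x t)"
    and update: "\<And>t. t \<in> {1..T} \<Longrightarrow>
                   x (Suc t) = polyak_step R \<eta> \<rho> g (s t) (grad t (x t)) (x t)"
    and xstar_feas: "g xstar \<le> - \<rho>"
    and xstar_min: "\<And>z. g z \<le> - \<rho> \<Longrightarrow> (\<Sum>t=1..T. f t xstar) \<le> (\<Sum>t=1..T. f t z)"
  shows "(\<Sum>t=1..T. f t (x t) - f t xstar) \<le> 2 * R\<^sup>2 / \<eta> + \<eta> / 2 * G\<^sub>f\<^sup>2 * real T"
proof -
  let ?C = "cball (0::'a) R"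
  have Cc: "convex ?C" "closed ?C" "?C \<noteq> {}" using A1 by auto
  have "g xstar \<le> 0" using xstar_feas rho by simp
  hence xs_in: "xstar \<in> ?C" using A1(2) by blast
  have proj: "norm (closest_point ?C y - xstar) \<le> norm (y - xstar)" for y
    using closest_point_lipschitz[OF Cc, of y xstar] closest_point_self[OF xs_in]
    by (simp add: dist_norm)
  have xin: "t \<in> {1..T} \<Longrightarrow> x t \<in> ?C" for t
  proof (induction t)
    case 0 thus ?case by simp
  next
    case (Suc n)
    show ?case
    proof (cases "n = 0")
      case True thus ?thesis using x1 by simp
    next
      case False
      hence "n \<in> {1..T}" using Suc.prems by auto
      thus ?thesis using update closest_point_in_set[OF Cc(2,3)]
        unfolding polyak_step_def Let_def by simp
    qed
  qed
  define D where "D t = (norm (x t - xstar))\<^sup>2" for t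
  have step: "f t (x t) - f t xstar \<le> (D t - D (Suc t)) / (2 * \<eta>) + \<eta> / 2 * G\<^sub>f\<^sup>2"
    if t: "t \<in> {1..T}" for t
  proof -
    define gd where "gd = grad t (x t)"
    define y where "y = x t - \<eta> *\<^sub>R gd"
    have gb: "norm gd \<le> G\<^sub>f" using A2_bound(2)[OF t xin[OF t]] gd_def by simp
    have tan: "f t (x t) - f t xstar \<le> inner gd (x t - xstar)"
      using tangent_ineq[OF A2_convex[OF t] A2_grad[OF t], of "x t" xstar] gd_def
      by (simp add: inner_diff_right)
    have sg: "g (x t) + inner (s t) (xstar - x t) + \<rho> \<le> 0"
    proof -
      have "g xstar \<ge> g (x t) + inner (s t) (xstar - x t)"
        using subgrad[OF t] unfolding subdiff_def by blast
      thus ?thesis using xstar_feas by linarith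
    qed
    have ny: "norm (x (Suc t) - xstar) \<le> norm (y - xstar)"
    proof (cases "s t = 0")
      case True
      thus ?thesis using update[OF t] proj unfolding polyak_step_def Let_def y_def gd_def by simp
    next
      case False
      have "x (Suc t) = closest_point ?C (y - (max (g (x t) + inner (s t) (y - x t) + \<rho>) 0 / (norm (s t))\<^sup>2) *\<^sub>R s t)"
        using update[OF t] False unfolding polyak_step_def Let_def y_def gd_def by simp
      hence "norm (x (Suc t) - xstar) \<le> norm (y - (max ((g (x t) + \<rho>) + inner (s t) (y - x t)) 0 / (norm (s t))\<^sup>2) *\<^sub>R s t - xstar)"
        using proj by (simp add: add_ac)
      also have "\<dots> \<le> norm (y - xstar)"
        by (rule halfspace_step) (use sg in \<open>simp add: add_ac\<close>)
      finally show ?thesis .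
    qed
    have "D (Suc t) \<le> (norm (y - xstar))\<^sup>2" unfolding D_def using ny by (simp add: power_mono)
    also have "(norm (y - xstar))\<^sup>2 = D t - 2 * (\<eta> * inner gd (x t - xstar)) + \<eta> * \<eta> * (norm gd)\<^sup>2"
    proof -
      have e: "y - xstar = (x t - xstar) - \<eta> *\<^sub>R gd" by (simp add: y_def)
      show ?thesis unfolding e D_def by (rule nsq)
    qed
    also have "\<dots> \<le> D t - 2 * (\<eta> * inner gd (x t - xstar)) + \<eta> * \<eta> * G\<^sub>f\<^sup>2"
      using gb eta by (simp add: power_mono)
    finally have "2 * (\<eta> * inner gd (x t - xstar)) \<le> D t - D (Suc t) + \<eta> * \<eta> * G\<^sub>f\<^sup>2" by linarith
    hence "inner gd (x t - xstar) \<le> (D t - D (Suc t)) / (2 * \<eta>) + \<eta> / 2 * G\<^sub>f\<^sup>2"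
      using eta by (simp add: field_simps power2_eq_square)
    thus ?thesis using tan by simp
  qed
  have S1: "(\<Sum>t=1..T. f t (x t) - f t xstar) \<le> (\<Sum>t=1..T. (D t - D (Suc t)) / (2 * \<eta>) + \<eta> / 2 * G\<^sub>f\<^sup>2)"
    by (rule sum_mono) (rule step)
  have S2: "(\<Sum>t=1..T. (D t - D (Suc t)) / (2 * \<eta>) + \<eta> / 2 * G\<^sub>f\<^sup>2) = (\<Sum>t=1..T. D t - D (Suc t)) / (2 * \<eta>) + \<eta> / 2 * G\<^sub>f\<^sup>2 * real T"
    by (simp add: sum.distrib sum_divide_distrib)
  have S3: "(\<Sum>t=1..T. D t - D (Suc t)) = D 1 - D (Suc T)"
    by (induction T) (simp_all add: sum.cl_ivl_Suc)
  have S4: "D 1 - D (Suc T) \<le> (2 * R)\<^sup>2"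
  proof -
    have "norm (x 1 - xstar) \<le> norm (x 1) + norm xstar" by (rule norm_triangle_ineq4)
    also have "\<dots> \<le> 2 * R" using x1 xs_in by simp
    finally have "norm (x 1 - xstar) \<le> 2 * R" .
    hence "D 1 \<le> (2*R)\<^sup>2" unfolding D_def by (rule power_mono) simp
    moreover have "D (Suc T) \<ge> 0" unfolding D_def by simp
    ultimately show ?thesis by simp
  qed
  have S5: "(D 1 - D (Suc T)) / (2 * \<eta>) \<le> (2 * R)\<^sup>2 / (2 * \<eta>)"
    using eta S4 by (intro divide_right_mono) simp_all
  have S6: "(2 * R)\<^sup>2 / (2 * \<eta>) = 2 * R\<^sup>2 / \<eta>"
    using eta by (simp add: power2_eq_square)
  show ?thesis using S1 S2 S5 S6 unfolding S3 by linarith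
qed

end
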